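(* Let $g_0=dr^2+f(r)^2d\theta^2$ be a smooth rotationally symmetric metric on $M=\mathbb{S}^1\times[-\rho,\rho]$ with $A_{g_0}(M)=1$, $R_{g_0}>0$, $k_{g_0}\le0$ on $\partial M$, with $k_{g_0}$ constant on each boundary component and $k_{g_0}<0$ on at least one boundary component. Assume that for every time the minimum over $M$ of the scalar curvature is attained on both components of $\partial M$. Then there is a constant $c_2>0$ such that the normalised flow $g(t)$ starting at $g_0$ satisfies, for all $t\ge0$, $$\max_M R(\cdot,t)\ge\frac{2}{t+c_2}.$$
   Context: $R$ denotes scalar curvature (twice the Gauss curvature), $k_g$ the geodesic curvature of $\partial M$ w.r.t. the outward normal. The unnormalised flow solves $\partial_{\tilde t}\tilde g=-\tilde R\tilde g$, $k_{\tilde g}=k_{g_0}$ on $\partial M$, $\tilde g(0)=g_0$; it exists for all time for such data. The normalised flow is $g=\phi\tilde g$ with $\phi(\tilde t)$ chosen so that $A_g(M)=1$, reparametrised by $t=\int_0^{\tilde t}\phi(\tau)d\tau$; it solves $\partial_t g=(r-R)g$, $k_g=k_{g_0}/\sqrt{\phi}$ on $\partial M$, $g(0)=g_0$, with $r=\int_M R\,dA_g$. Rotational symmetry is preserved by the flow, so $R$ is constant on each boundary circle. *)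

theory Defs
  imports "HOL-Analysis.Analysis"
begin

text \<open>Rotationally symmetric metrics on the annulus S^1 x [-rho,rho], written in
coordinates (r,theta) as  E(r) dr^2 + G(r) dtheta^2  with E, G > 0 depending only on r.\<close>

text \<open>A real function is smooth (C-infinity), on all of R.  Smooth functions on the
closed interval are identified with restrictions of smooth functions on R.\<close>
definition smooth_fun :: "(real \<Rightarrow> real) \<Rightarrow> bool" where
  "smooth_fun f \<longleftrightarrow> (\<forall>k x. ((deriv ^^ k) f) differentiable (at x))"

definition rs_scalar :: "(real \<Rightarrow> real) \<Rightarrow> (real \<Rightarrow> real) \<Rightarrow> real \<Rightarrow> real" where
  "rs_scalar E G r =
     - 2 / sqrt (E r * G r) * deriv (\<lambda>s. deriv (\<lambda>x. sqrt (G x)) s / sqrt (E s)) r"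

definition rs_area :: "(real \<Rightarrow> real) \<Rightarrow> (real \<Rightarrow> real) \<Rightarrow> real \<Rightarrow> real \<Rightarrow> real" where
  "rs_area E G a b = 2 * pi * integral {a..b} (\<lambda>r. sqrt (E r * G r))"

definition rs_total_scalar :: "(real \<Rightarrow> real) \<Rightarrow> (real \<Rightarrow> real) \<Rightarrow> real \<Rightarrow> real \<Rightarrow> real" where
  "rs_total_scalar E G a b =
     2 * pi * integral {a..b} (\<lambda>r. rs_scalar E G r * sqrt (E r * G r))"

text \<open>Geodesic curvature of the circle {r = c}, with respect to the unit normal
pointing in the direction of increasing r (outward at the right boundary r = rho);
at the left boundary r = -rho the outward normal is the opposite one.\<close>
definition rs_geod_curv_up :: "(real \<Rightarrow> real) \<Rightarrow> (real \<Rightarrow> real) \<Rightarrow> real \<Rightarrow> real" where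
  "rs_geod_curv_up E G c = deriv (\<lambda>x. sqrt (G x)) c / (sqrt (E c) * sqrt (G c))"

definition rs_bdry_k_right :: "real \<Rightarrow> (real \<Rightarrow> real) \<Rightarrow> (real \<Rightarrow> real) \<Rightarrow> real" where
  "rs_bdry_k_right \<rho> E G = rs_geod_curv_up E G \<rho>"

definition rs_bdry_k_left :: "real \<Rightarrow> (real \<Rightarrow> real) \<Rightarrow> (real \<Rightarrow> real) \<Rightarrow> real" where
  "rs_bdry_k_left \<rho> E G = - rs_geod_curv_up E G (- \<rho>)"

text \<open>Initial metric g0 = dr^2 + f(r)^2 dtheta^2 and the metric g(t) = u(.,t) g0.
(The normalised flow moves g by pointwise scalings, so g(t) is conformal to g0,
and rotational symmetry is preserved, so u depends only on r and t.)\<close>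
definition E0 :: "real \<Rightarrow> real" where "E0 = (\<lambda>r. 1)"
definition G0 :: "(real \<Rightarrow> real) \<Rightarrow> real \<Rightarrow> real" where "G0 f = (\<lambda>r. (f r)\<^sup>2)"
definition Et :: "(real \<Rightarrow> real \<Rightarrow> real) \<Rightarrow> real \<Rightarrow> real \<Rightarrow> real" where
  "Et u t = (\<lambda>r. u r t)"
definition Gt :: "(real \<Rightarrow> real) \<Rightarrow> (real \<Rightarrow> real \<Rightarrow> real) \<Rightarrow> real \<Rightarrow> real \<Rightarrow> real" where
  "Gt f u t = (\<lambda>r. u r t * (f r)\<^sup>2)"

definition Rflow :: "(real \<Rightarrow> real) \<Rightarrow> (real \<Rightarrow> real \<Rightarrow> real) \<Rightarrow> real \<Rightarrow> real \<Rightarrow> real" where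
  "Rflow f u r t = rs_scalar (Et u t) (Gt f u t) r"
definition rbar :: "real \<Rightarrow> (real \<Rightarrow> real) \<Rightarrow> (real \<Rightarrow> real \<Rightarrow> real) \<Rightarrow> real \<Rightarrow> real" where
  "rbar \<rho> f u t = rs_total_scalar (Et u t) (Gt f u t) (-\<rho>) \<rho>"

text \<open>phi(t) in the normalised time variable: from g = phi g~ and dt = phi dt~ one gets
d phi/dt = r(t) phi, phi(0) = 1 (since A_{g0} = 1), hence phi(t) = exp(int_0^t r).\<close>
definition phi_norm :: "real \<Rightarrow> (real \<Rightarrow> real) \<Rightarrow> (real \<Rightarrow> real \<Rightarrow> real) \<Rightarrow> real \<Rightarrow> real" where
  "phi_norm \<rho> f u t = exp (integral {0..t} (rbar \<rho> f u))"

definition normalised_flow :: "real \<Rightarrow> (real \<Rightarrow> real) \<Rightarrow> (real \<Rightarrow> real \<Rightarrow> real) \<Rightarrow> bool" where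
  "normalised_flow \<rho> f u \<longleftrightarrow>
     (\<forall>r\<in>{-\<rho>..\<rho>}. u r 0 = 1) \<and>
     (\<forall>t\<ge>0. \<forall>r\<in>{-\<rho>..\<rho>}. u r t > 0) \<and>
     (\<forall>t\<ge>0. \<forall>x. (\<lambda>r. u r t) differentiable (at x) \<and>
                  deriv (\<lambda>r. u r t) differentiable (at x)) \<and>
     continuous_on ({-\<rho>..\<rho>} \<times> {0..}) (\<lambda>(r,t). u r t) \<and>
     continuous_on ({-\<rho>..\<rho>} \<times> {0..}) (\<lambda>(r,t). deriv (\<lambda>x. u x t) r) \<and>
     continuous_on ({-\<rho>..\<rho>} \<times> {0..}) (\<lambda>(r,t). deriv (deriv (\<lambda>x. u x t)) r) \<and>
     (\<forall>r\<in>{-\<rho>..\<rho>}. \<forall>t\<ge>0.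
        ((\<lambda>s. u r s) has_real_derivative ((rbar \<rho> f u t - Rflow f u r t) * u r t))
          (at t within {0..})) \<and>
     (\<forall>t\<ge>0.
        rs_bdry_k_right \<rho> (Et u t) (Gt f u t)
          = rs_bdry_k_right \<rho> E0 (G0 f) / sqrt (phi_norm \<rho> f u t) \<and>
        rs_bdry_k_left \<rho> (Et u t) (Gt f u t)
          = rs_bdry_k_left \<rho> E0 (G0 f) / sqrt (phi_norm \<rho> f u t))"

end

theory Submission
  imports Defs
begin

lemma sqrt_local_deriv:
  fixes U f :: "real \<Rightarrow> real"
  assumes dU: "\<And>x. U differentiable (at x)" and df: "\<And>x. f differentiable (at x)"
    and pos: "U y > 0" "f y > 0"
  shows "((\<lambda>x. sqrt (U x * (f x)\<^sup>2)) has_real_derivative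
          (deriv U y * f y / (2 * sqrt (U y)) + sqrt (U y) * deriv f y)) (at y)"
proof -
  have cU: "continuous_on UNIV U" using dU
    by (simp add: continuous_at_imp_continuous_on differentiable_imp_continuous_within)
  have cf: "continuous_on UNIV f" using df
    by (simp add: continuous_at_imp_continuous_on differentiable_imp_continuous_within)
  have op: "open {x. 0 < U x}" "open {x. 0 < f x}"
    by (rule open_Collect_less[OF _ cU], simp, rule open_Collect_less[OF _ cf], simp)
  have ev: "eventually (\<lambda>x. x \<in> {x. 0 < U x} \<inter> {x. 0 < f x}) (nhds y)"
    by (rule eventually_nhds_in_open) (use op pos in auto)
  have ev2: "eventually (\<lambda>x. sqrt (U x) * f x = sqrt (U x * (f x)\<^sup>2)) (nhds y)"
    using ev by eventually_elim (auto simp: real_sqrt_mult)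
  have DU: "(U has_real_derivative deriv U y) (at y)" using dU DERIV_deriv_iff_real_differentiable by blast
  have Df: "(f has_real_derivative deriv f y) (at y)" using df DERIV_deriv_iff_real_differentiable by blast
  have "((\<lambda>x. sqrt (U x) * f x) has_real_derivative
          (deriv U y * f y / (2 * sqrt (U y)) + sqrt (U y) * deriv f y)) (at y)"
    using pos by (auto intro!: derivative_eq_intros DU Df simp: field_simps)
  then show ?thesis using DERIV_cong_ev[OF refl ev2 refl] by simp
qed

definition Hx :: "(real \<Rightarrow> real) \<Rightarrow> (real \<Rightarrow> real) \<Rightarrow> real \<Rightarrow> real" where
  "Hx U f y = deriv U y * f y / (2 * U y) + deriv f y"
definition Hp :: "(real \<Rightarrow> real) \<Rightarrow> (real \<Rightarrow> real) \<Rightarrow> real \<Rightarrow> real" where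
  "Hp U f y = (deriv (deriv U) y * f y + deriv U y * deriv f y) / (2 * U y)
     - (deriv U y)\<^sup>2 * f y / (2 * (U y)\<^sup>2) + deriv (deriv f) y"

lemma open_pos:
  fixes U :: "real \<Rightarrow> real"
  assumes dU: "\<And>x. U differentiable (at x)"
  shows "open {x. 0 < U x}"
proof -
  have cU: "continuous_on UNIV U" using dU
    by (simp add: continuous_at_imp_continuous_on differentiable_imp_continuous_within)
  show ?thesis by (rule open_Collect_less[OF _ cU], simp)
qed

lemma Hx_deriv:
  fixes U f :: "real \<Rightarrow> real"
  assumes dU: "\<And>x. U differentiable (at x)" and ddU: "\<And>x. deriv U differentiable (at x)"
    and df: "\<And>x. f differentiable (at x)" and ddf: "\<And>x. deriv f differentiable (at x)"
    and pos: "U y > 0"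
  shows "(Hx U f has_real_derivative Hp U f y) (at y)"
proof -
  have DU: "(U has_real_derivative deriv U y) (at y)" using dU DERIV_deriv_iff_real_differentiable by blast
  have Df: "(f has_real_derivative deriv f y) (at y)" using df DERIV_deriv_iff_real_differentiable by blast
  have DDU: "(deriv U has_real_derivative deriv (deriv U) y) (at y)" using ddU DERIV_deriv_iff_real_differentiable by blast
  have DDf: "(deriv f has_real_derivative deriv (deriv f) y) (at y)" using ddf DERIV_deriv_iff_real_differentiable by blast
  have D: "((\<lambda>y. deriv U y * f y / (2 * U y) + deriv f y) has_real_derivative
     ((deriv (deriv U) y * f y + deriv f y * deriv U y) * (2 * U y) - deriv U y * f y * (2 * deriv U y))
       / (2 * U y * (2 * U y)) + deriv (deriv f) y) (at y)"
    using pos by (intro DERIV_add DERIV_divide DERIV_mult DDU Df DU DDf DERIV_cmult) auto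
  have e: "((deriv (deriv U) y * f y + deriv f y * deriv U y) * (2 * U y) - deriv U y * f y * (2 * deriv U y))
       / (2 * U y * (2 * U y)) + deriv (deriv f) y = Hp U f y"
    unfolding Hp_def using pos by (simp add: field_simps power2_eq_square)
  have "((\<lambda>y. deriv U y * f y / (2 * U y) + deriv f y) has_real_derivative Hp U f y) (at y)"
    using D e by simp
  then show ?thesis by (simp add: Hx_def[abs_def])
qed

lemma curv_formula:
  fixes U f :: "real \<Rightarrow> real"
  assumes dU: "\<And>x. U differentiable (at x)" and ddU: "\<And>x. deriv U differentiable (at x)"
    and df: "\<And>x. f differentiable (at x)" and ddf: "\<And>x. deriv f differentiable (at x)"
    and pos: "U y > 0" "f y > 0"
  shows "rs_scalar U (\<lambda>r. U r * (f r)\<^sup>2) y = -2 / (U y * f y) * Hp U f y"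
    and "rs_geod_curv_up U (\<lambda>r. U r * (f r)\<^sup>2) y = Hx U f y / (sqrt (U y) * f y)"
proof -
  have S: "open ({x. 0 < U x} \<inter> {x. 0 < f x})" using open_pos[OF dU] open_pos[OF df] by auto
  have eq: "deriv (\<lambda>x. sqrt (U x * (f x)\<^sup>2)) z / sqrt (U z) = Hx U f z"
    if "z \<in> {x. 0 < U x} \<inter> {x. 0 < f x}" for z
  proof -
    have "deriv (\<lambda>x. sqrt (U x * (f x)\<^sup>2)) z = deriv U z * f z / (2 * sqrt (U z)) + sqrt (U z) * deriv f z"
      using sqrt_local_deriv[OF dU df, of z] that by (auto intro: DERIV_imp_deriv)
    moreover have "sqrt (U z) * sqrt (U z) = U z" "sqrt (U z) > 0" using that by auto
    moreover have "(deriv U z * f z / (2 * sqrt (U z)) + sqrt (U z) * deriv f z) / sqrt (U z)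
       = deriv U z * f z / (2 * (sqrt (U z) * sqrt (U z))) + deriv f z" using \<open>sqrt (U z) > 0\<close>
      by (simp add: field_simps)
    ultimately show ?thesis unfolding Hx_def by simp
  qed
  have ev: "eventually (\<lambda>z. deriv (\<lambda>x. sqrt (U x * (f x)\<^sup>2)) z / sqrt (U z) = Hx U f z) (nhds y)"
    using eventually_nhds_in_open[OF S, of y] pos by (auto elim!: eventually_mono intro: eq)
  have "((\<lambda>z. deriv (\<lambda>x. sqrt (U x * (f x)\<^sup>2)) z / sqrt (U z)) has_real_derivative Hp U f y) (at y)"
    using DERIV_cong_ev[OF refl ev refl] Hx_deriv[OF dU ddU df ddf pos(1)] by simp
  then have d: "deriv (\<lambda>z. deriv (\<lambda>x. sqrt (U x * (f x)\<^sup>2)) z / sqrt (U z)) y = Hp U f y"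
    by (rule DERIV_imp_deriv)
  have sq: "sqrt (U y * (U y * (f y)\<^sup>2)) = U y * f y"
    using pos by (simp add: real_sqrt_mult power2_eq_square[symmetric] del: real_sqrt_mult_self)
  show "rs_scalar U (\<lambda>r. U r * (f r)\<^sup>2) y = -2 / (U y * f y) * Hp U f y"
    unfolding rs_scalar_def d sq by simp
  have "deriv (\<lambda>x. sqrt (U x * (f x)\<^sup>2)) y = Hx U f y * sqrt (U y)"
    using eq[of y] pos by (simp add: field_simps)
  then show "rs_geod_curv_up U (\<lambda>r. U r * (f r)\<^sup>2) y = Hx U f y / (sqrt (U y) * f y)"
    unfolding rs_geod_curv_up_def using pos by (simp add: field_simps real_sqrt_mult)
qed

lemma mono_within:
  fixes g g' :: "real \<Rightarrow> real"
  assumes "a \<le> b" "\<And>x. x \<in> {a..b} \<Longrightarrow> (g has_real_derivative g' x) (at x within {a..b})"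
    "\<And>x. x \<in> {a..b} \<Longrightarrow> g' x \<ge> 0"
  shows "g a \<le> g b"
proof (rule DERIV_nonneg_imp_increasing_open[OF assms(1)])
  show "continuous_on {a..b} g"
    using assms(2) DERIV_continuous continuous_on_eq_continuous_within by blast
  fix x assume "a < x" "x < b"
  then show "\<exists>y. DERIV g x :> y \<and> 0 \<le> y"
    using assms(2)[of x] assms(3)[of x] at_within_Icc_at[of a x b] by auto
qed

lemma const_within:
  fixes g :: "real \<Rightarrow> real"
  assumes "\<And>x. x \<in> {a..b} \<Longrightarrow> (g has_real_derivative 0) (at x within {a..b})"
    "x \<in> {a..b}" "y \<in> {a..b}"
  shows "g x = g y"
  using has_field_derivative_zero_constant[of "{a..b}" g] assms by force

lemma cont_slice_t:
  fixes g :: "real \<Rightarrow> real \<Rightarrow> real"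
  assumes "continuous_on (I \<times> T) (\<lambda>(r,t). g r t)" "r0 \<in> I"
  shows "continuous_on T (\<lambda>t. g r0 t)"
proof -
  have "continuous_on T (\<lambda>t. (\<lambda>(r,t). g r t) (r0, t))"
    by (rule continuous_on_compose2[OF assms(1)]) (auto intro!: continuous_intros simp: assms(2))
  then show ?thesis by simp
qed

lemma cont_slice_r:
  fixes g :: "real \<Rightarrow> real \<Rightarrow> real"
  assumes "continuous_on (I \<times> T) (\<lambda>(r,t). g r t)" "t0 \<in> T"
  shows "continuous_on I (\<lambda>r. g r t0)"
proof -
  have "continuous_on I (\<lambda>r. (\<lambda>(r,t). g r t) (r, t0))"
    by (rule continuous_on_compose2[OF assms(1)]) (auto intro!: continuous_intros simp: assms(2))
  then show ?thesis by simp
qed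

lemma cont_swap:
  fixes g :: "real \<Rightarrow> real \<Rightarrow> real"
  assumes "continuous_on (I \<times> T) (\<lambda>(r,t). g r t)" "J \<subseteq> T"
  shows "continuous_on (J \<times> I) (\<lambda>(s,r). g r s)"
proof -
  have "continuous_on (J \<times> I) (\<lambda>p. (\<lambda>(r,t). g r t) (snd p, fst p))"
    by (rule continuous_on_compose2[OF assms(1)]) (use assms(2) in \<open>auto intro!: continuous_intros\<close>)
  then show ?thesis by (simp add: case_prod_beta)
qed

theorem theorem4p5:
  fixes \<rho> :: real and f :: "real \<Rightarrow> real" and u :: "real \<Rightarrow> real \<Rightarrow> real"
  assumes rho_pos: "\<rho> > 0"
    and f_smooth: "smooth_fun f"
    and f_pos: "\<forall>r\<in>{-\<rho>..\<rho>}. f r > 0"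
    and area1: "rs_area E0 (G0 f) (-\<rho>) \<rho> = 1"
    and R0_pos: "\<forall>r\<in>{-\<rho>..\<rho>}. rs_scalar E0 (G0 f) r > 0"
    and k0_nonpos: "rs_bdry_k_left \<rho> E0 (G0 f) \<le> 0" "rs_bdry_k_right \<rho> E0 (G0 f) \<le> 0"
    and k0_neg: "rs_bdry_k_left \<rho> E0 (G0 f) < 0 \<or> rs_bdry_k_right \<rho> E0 (G0 f) < 0"
    and flow: "normalised_flow \<rho> f u"
    and min_bdry: "\<forall>t\<ge>0. \<forall>r\<in>{-\<rho>..\<rho>}.
                     Rflow f u (-\<rho>) t \<le> Rflow f u r t \<and> Rflow f u \<rho> t \<le> Rflow f u r t"
  shows "\<exists>c2>0. \<forall>t\<ge>0. (SUP r\<in>{-\<rho>..\<rho>}. Rflow f u r t) \<ge> 2 / (t + c2)"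
proof -
  define I where "I = {-\<rho>..\<rho>}"
  define f1 where "f1 = deriv f"
  define f2 where "f2 = deriv f1"
  define D1 where "D1 r t = deriv (\<lambda>x. u x t) r" for r t
  define D2 where "D2 r t = deriv (deriv (\<lambda>x. u x t)) r" for r t
  define ph where "ph t = phi_norm \<rho> f u t" for t
  define rb where "rb t = rbar \<rho> f u t" for t
  define Rx where "Rx r t = -2 / (u r t * f r) * ((D2 r t * f r + D1 r t * f1 r) / (2 * u r t)
     - (D1 r t)\<^sup>2 * f r / (2 * (u r t)\<^sup>2) + f2 r)" for r t
  define Hb where "Hb t r = D1 r t * f r / (2 * u r t) + f1 r" for t r
  have rhoI: "\<rho> \<in> I" "-\<rho> \<in> I" using rho_pos by (auto simp: I_def)
  note fl = flow[unfolded normalised_flow_def]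
  have u0: "\<And>r. r \<in> I \<Longrightarrow> u r 0 = 1" using fl by (auto simp: I_def)
  have upos: "\<And>r t. t \<ge> 0 \<Longrightarrow> r \<in> I \<Longrightarrow> u r t > 0" using fl by (auto simp: I_def)
  have fpos: "\<And>r. r \<in> I \<Longrightarrow> f r > 0" using f_pos by (auto simp: I_def)
  have dU: "\<And>t x. t \<ge> 0 \<Longrightarrow> (\<lambda>r. u r t) differentiable (at x)" using fl by auto
  have ddU: "\<And>t x. t \<ge> 0 \<Longrightarrow> deriv (\<lambda>r. u r t) differentiable (at x)" using fl by auto
  have cu: "continuous_on (I \<times> {0..}) (\<lambda>(r,t). u r t)" using fl by (simp add: I_def)
  have cD1: "continuous_on (I \<times> {0..}) (\<lambda>(r,t). D1 r t)" using fl by (simp add: I_def D1_def)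
  have cD2: "continuous_on (I \<times> {0..}) (\<lambda>(r,t). D2 r t)" using fl by (simp add: I_def D2_def)
  have ut: "\<And>r t. r \<in> I \<Longrightarrow> t \<ge> 0 \<Longrightarrow>
      ((\<lambda>s. u r s) has_real_derivative ((rb t - Rflow f u r t) * u r t)) (at t within {0..})"
    using fl by (auto simp: I_def rb_def)
  have bc: "\<And>t. t \<ge> 0 \<Longrightarrow> rs_bdry_k_right \<rho> (Et u t) (Gt f u t)
          = rs_bdry_k_right \<rho> E0 (G0 f) / sqrt (ph t) \<and>
        rs_bdry_k_left \<rho> (Et u t) (Gt f u t) = rs_bdry_k_left \<rho> E0 (G0 f) / sqrt (ph t)"
    using fl by (auto simp: ph_def)
  have df: "\<And>x. f differentiable (at x)" using f_smooth unfolding smooth_fun_def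
    by (metis funpow_0)
  have ddf: "\<And>x. f1 differentiable (at x)" using f_smooth unfolding smooth_fun_def f1_def
    by (metis funpow_0 funpow_Suc_right o_apply)
  have dddf: "\<And>x. f2 differentiable (at x)" using f_smooth unfolding smooth_fun_def f2_def f1_def
    by (metis funpow_0 funpow_Suc_right o_apply)
  have cf: "continuous_on UNIV f" "continuous_on UNIV f1" "continuous_on UNIV f2"
    using df ddf dddf
    by (simp_all add: continuous_at_imp_continuous_on differentiable_imp_continuous_within)
  have Gt_eq: "Gt f u t = (\<lambda>r. (\<lambda>x. u x t) r * (f r)\<^sup>2)" for t by (simp add: Gt_def)
  have Et_eq: "Et u t = (\<lambda>x. u x t)" for t by (simp add: Et_def)
  have R_eq: "Rflow f u r t = Rx r t" if "t \<ge> 0" "r \<in> I" for r t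
    using curv_formula(1)[of "\<lambda>x. u x t" f r, OF dU[OF that(1)] ddU[OF that(1)] df ddf[unfolded f1_def]
      upos[OF that(1,2)] fpos[OF that(2)]]
    unfolding Rflow_def Gt_eq Et_eq Rx_def Hp_def D1_def D2_def f1_def f2_def by simp
  have Hb_eq: "Hx (\<lambda>x. u x t) f r = Hb t r" for t r
    by (simp add: Hx_def Hb_def D1_def f1_def)
  have G0_eq: "G0 f = (\<lambda>r. (\<lambda>x. 1::real) r * (f r)\<^sup>2)" by (simp add: G0_def)
  have E0_eq: "E0 = (\<lambda>x. 1::real)" by (simp add: E0_def)
  have k0: "rs_geod_curv_up E0 (G0 f) r = f1 r / f r" if "r \<in> I" for r
  proof -
    have "rs_geod_curv_up (\<lambda>x. 1::real) (\<lambda>r. (\<lambda>x. 1::real) r * (f r)\<^sup>2) r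
        = Hx (\<lambda>x. 1) f r / (sqrt 1 * f r)"
      by (rule curv_formula(2)) (auto simp: df ddf[unfolded f1_def] fpos that)
    then show ?thesis by (simp add: E0_def G0_def Hx_def f1_def)
  qed
  have kt: "rs_geod_curv_up (Et u t) (Gt f u t) r = Hb t r / (sqrt (u r t) * f r)"
    if "t \<ge> 0" "r \<in> I" for t r
    using curv_formula(2)[of "\<lambda>x. u x t" f r, OF dU[OF that(1)] ddU[OF that(1)] df ddf[unfolded f1_def]
      upos[OF that(1,2)] fpos[OF that(2)]]
    unfolding Gt_eq Et_eq Hb_eq by simp
  have phpos: "ph t > 0" for t by (simp add: ph_def phi_norm_def)
  have HbR: "Hb t \<rho> = f1 \<rho> * sqrt (u \<rho> t) / sqrt (ph t)" if "t \<ge> 0" for t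
  proof -
    have "Hb t \<rho> / (sqrt (u \<rho> t) * f \<rho>) = f1 \<rho> / f \<rho> / sqrt (ph t)"
      using bc[OF that] kt[OF that rhoI(1)] k0[OF rhoI(1)]
      by (simp add: rs_bdry_k_right_def)
    moreover have "sqrt (u \<rho> t) > 0" "f \<rho> > 0" "sqrt (ph t) > 0"
      using upos[OF that rhoI(1)] fpos[OF rhoI(1)] phpos by auto
    ultimately show ?thesis by (simp add: field_simps)
  qed
  have HbL: "Hb t (-\<rho>) = f1 (-\<rho>) * sqrt (u (-\<rho>) t) / sqrt (ph t)" if "t \<ge> 0" for t
  proof -
    have "- (Hb t (-\<rho>) / (sqrt (u (-\<rho>) t) * f (-\<rho>))) = - (f1 (-\<rho>) / f (-\<rho>)) / sqrt (ph t)"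
      using bc[OF that] kt[OF that rhoI(2)] k0[OF rhoI(2)]
      by (simp add: rs_bdry_k_left_def)
    moreover have "sqrt (u (-\<rho>) t) > 0" "f (-\<rho>) > 0" "sqrt (ph t) > 0"
      using upos[OF that rhoI(2)] fpos[OF rhoI(2)] phpos by auto
    ultimately show ?thesis by (simp add: field_simps)
  qed
  have k0R: "f1 \<rho> < 0 \<or> f1 (-\<rho>) > 0"
  proof -
    have "f1 \<rho> / f \<rho> < 0 \<or> - (f1 (-\<rho>) / f (-\<rho>)) < 0"
      using k0_neg k0[OF rhoI(1)] k0[OF rhoI(2)] by (auto simp: rs_bdry_k_left_def rs_bdry_k_right_def)
    then show ?thesis using fpos[OF rhoI(1)] fpos[OF rhoI(2)]
      by (auto simp: divide_less_0_iff zero_less_divide_iff)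
  qed
  have k0R': "f1 \<rho> \<le> 0" "f1 (-\<rho>) \<ge> 0"
  proof -
    have "f1 \<rho> / f \<rho> \<le> 0" "- (f1 (-\<rho>) / f (-\<rho>)) \<le> 0"
      using k0_nonpos k0[OF rhoI(1)] k0[OF rhoI(2)] by (simp_all add: rs_bdry_k_left_def rs_bdry_k_right_def)
    then show "f1 \<rho> \<le> 0" "f1 (-\<rho>) \<ge> 0" using fpos[OF rhoI(1)] fpos[OF rhoI(2)]
      by (auto simp: divide_le_0_iff zero_le_divide_iff)
  qed
  define C where "C = -4 * pi * (f1 \<rho> - f1 (-\<rho>))"
  have Cpos: "C > 0" using k0R k0R' by (auto simp: C_def mult_pos_neg)
  define Pp where "Pp r t = (D2 r t * f r + D1 r t * f1 r) / (2 * u r t)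
     - (D1 r t)\<^sup>2 * f r / (2 * (u r t)\<^sup>2) + f2 r" for r t
  have Rx_Pp: "Rx r t = -2 / (u r t * f r) * Pp r t" for r t by (simp add: Rx_def Pp_def)
  have sq: "sqrt (Et u t r * Gt f u t r) = u r t * f r" if "t \<ge> 0" "r \<in> I" for r t
  proof -
    have "Et u t r * Gt f u t r = (u r t * f r)\<^sup>2" by (simp add: Et_def Gt_def power2_eq_square)
    then show ?thesis using upos[OF that] fpos[OF that(2)] by simp
  qed
  have rb_int: "rb t = 2 * pi * integral I (\<lambda>r. Rx r t * (u r t * f r))" if "t \<ge> 0" for t
  proof -
    have "integral I (\<lambda>r. rs_scalar (Et u t) (Gt f u t) r * sqrt (Et u t r * Gt f u t r))
        = integral I (\<lambda>r. Rx r t * (u r t * f r))"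
      by (rule integral_cong) (use R_eq[OF that] sq[OF that] in \<open>auto simp: Rflow_def\<close>)
    then show ?thesis by (simp add: rb_def rbar_def rs_total_scalar_def I_def)
  qed
  have Hb_deriv: "(Hb t has_real_derivative Pp r t) (at r)" if "t \<ge> 0" "r \<in> I" for t r
  proof -
    have "(Hx (\<lambda>x. u x t) f has_real_derivative Hp (\<lambda>x. u x t) f r) (at r)"
      by (rule Hx_deriv[OF dU[OF that(1)] ddU[OF that(1)] df ddf[unfolded f1_def] upos[OF that]])
    moreover have "Hx (\<lambda>x. u x t) f = Hb t" using Hb_eq by auto
    moreover have "Hp (\<lambda>x. u x t) f r = Pp r t" by (simp add: Hp_def Pp_def D1_def D2_def f1_def f2_def)
    ultimately show ?thesis by simp
  qed
  have rb_H: "rb t = -4 * pi * (Hb t \<rho> - Hb t (-\<rho>))" if "t \<ge> 0" for t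
  proof -
    have "((\<lambda>r. Pp r t) has_integral (Hb t \<rho> - Hb t (-\<rho>))) {-\<rho>..\<rho>}"
      by (rule fundamental_theorem_of_calculus)
         (use rho_pos Hb_deriv[OF that] in \<open>auto simp: I_def has_real_derivative_iff_has_vector_derivative[symmetric] intro: DERIV_subset\<close>)
    then have i: "integral I (\<lambda>r. Pp r t) = Hb t \<rho> - Hb t (-\<rho>)" by (simp add: I_def integral_unique)
    have "integral I (\<lambda>r. Rx r t * (u r t * f r)) = integral I (\<lambda>r. -2 * Pp r t)"
      by (rule integral_cong) (use upos[OF that] fpos in \<open>fastforce simp: Rx_Pp\<close>)
    also have "\<dots> = -2 * integral I (\<lambda>r. Pp r t)" by simp
    finally have e: "integral I (\<lambda>r. Rx r t * (u r t * f r)) = -2 * (Hb t \<rho> - Hb t (-\<rho>))"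
      using i by simp
    show ?thesis unfolding rb_int[OF that] e by (simp add: algebra_simps)
  qed
  have cHb: "continuous_on {0..} (\<lambda>t. Hb t r)" if "r \<in> I" for r
  proof -
    have "continuous_on {0..} (\<lambda>t. D1 r t * f r / (2 * u r t) + f1 r)"
      using cont_slice_t[OF cD1 that] cont_slice_t[OF cu that] upos[OF _ that]
      by (auto intro!: continuous_intros) (metis less_irrefl)
    then show ?thesis by (simp add: Hb_def)
  qed
  have crb: "continuous_on {0..} rb"
  proof -
    have "continuous_on {0..} (\<lambda>t. -4 * pi * (Hb t \<rho> - Hb t (-\<rho>)))"
      using cHb[OF rhoI(1)] cHb[OF rhoI(2)] by (auto intro!: continuous_intros)
    then show ?thesis by (rule continuous_on_eq) (use rb_H in auto)
  qed
  have Rsym: "Rflow f u \<rho> t = Rflow f u (-\<rho>) t" if "t \<ge> 0" for t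
    using min_bdry that rhoI by (auto simp: I_def intro: antisym)
  have uab: "u \<rho> t = u (-\<rho>) t" if "t \<ge> 0" for t
  proof -
    have "(\<lambda>s. u \<rho> s / u (-\<rho>) s) t = (\<lambda>s. u \<rho> s / u (-\<rho>) s) 0"
    proof (rule const_within[where g="\<lambda>s. u \<rho> s / u (-\<rho>) s" and a=0 and b=t])
      fix s assume s: "s \<in> {0..t}"
      then have s0: "s \<ge> 0" by auto
      have "((\<lambda>s. u \<rho> s / u (-\<rho>) s) has_real_derivative
         (((rb s - Rflow f u \<rho> s) * u \<rho> s) * u (-\<rho>) s - u \<rho> s * ((rb s - Rflow f u (-\<rho>) s) * u (-\<rho>) s))
           / (u (-\<rho>) s * u (-\<rho>) s)) (at s within {0..t})"
        using DERIV_divide[OF DERIV_subset[OF ut[OF rhoI(1) s0]] DERIV_subset[OF ut[OF rhoI(2) s0]]]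
          upos[OF s0 rhoI(2)] by auto
      then show "((\<lambda>s. u \<rho> s / u (-\<rho>) s) has_real_derivative 0) (at s within {0..t})"
        using Rsym[OF s0] by (simp add: algebra_simps)
    qed (auto simp: that)
    then show ?thesis using u0 rhoI upos[OF that rhoI(2)] by simp
  qed
  have rb_C: "rb t = C * sqrt (u \<rho> t / ph t)" if "t \<ge> 0" for t
    using rb_H[OF that] HbR[OF that] HbL[OF that] uab[OF that]
    by (simp add: C_def real_sqrt_divide algebra_simps)
  have Rx_cont: "continuous_on (I \<times> {0..}) (\<lambda>(r,t). Rx r t)"
  proof -
    have c1: "continuous_on (I \<times> {0..}) (\<lambda>p. u (fst p) (snd p))" using cu by (simp add: case_prod_beta)
    have c2: "continuous_on (I \<times> {0..}) (\<lambda>p. D1 (fst p) (snd p))" using cD1 by (simp add: case_prod_beta)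
    have c3: "continuous_on (I \<times> {0..}) (\<lambda>p. D2 (fst p) (snd p))" using cD2 by (simp add: case_prod_beta)
    have cf': "continuous_on (I \<times> {0..}) (\<lambda>p. f (fst p))" "continuous_on (I \<times> {0..}) (\<lambda>p. f1 (fst p))"
       "continuous_on (I \<times> {0..}) (\<lambda>p. f2 (fst p))"
      by (auto intro!: continuous_on_compose2[OF cf(1)] continuous_on_compose2[OF cf(2)]
          continuous_on_compose2[OF cf(3)] continuous_intros)
    have nz: "\<forall>x\<in>I. \<forall>y\<ge>0. u x y \<noteq> 0" "\<forall>x\<in>I. f x \<noteq> 0"
      using upos fpos by (metis less_irrefl)+
    have "continuous_on (I \<times> {0..}) (\<lambda>p. Rx (fst p) (snd p))"
      unfolding Rx_def
      by (intro continuous_intros c1 c2 c3 cf') (auto simp: nz)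
    then show ?thesis by (simp add: case_prod_beta)
  qed
  have A0: "2 * pi * integral I (\<lambda>r. u r 0 * f r) = 1"
  proof -
    have "integral I (\<lambda>r. u r 0 * f r) = integral I (\<lambda>r. sqrt (E0 r * G0 f r))"
      by (rule integral_cong) (use u0 fpos in \<open>force simp: E0_def G0_def\<close>)
    then show ?thesis using area1 by (simp add: rs_area_def I_def)
  qed
  have rb_eq: "rbar \<rho> f u = rb" by (simp add: rb_def fun_eq_iff)
  have ph0: "ph 0 = 1" by (simp add: ph_def phi_norm_def)
  have main: "(SUP r\<in>{-\<rho>..\<rho>}. Rflow f u r \<tau>) \<ge> 2 / (\<tau> + 2 / C)" if \<tau>0: "\<tau> \<ge> 0" for \<tau>
  proof -
    define J where "J = {0..\<tau>}"
    have J0: "s \<ge> 0" if "s \<in> J" for s using that by (simp add: J_def)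
    have JT: "J \<subseteq> {0..}" by (auto simp: J_def)
    define F where "F s = integral {0..s} rb" for s
    have dF: "(F has_real_derivative rb s) (at s within J)" if "s \<in> J" for s
      using integral_has_vector_derivative[OF continuous_on_subset[OF crb JT, unfolded J_def], of s] that
      unfolding has_real_derivative_iff_has_vector_derivative J_def F_def[abs_def] by simp
    have ph_eq: "ph s = exp (F s)" for s by (simp add: ph_def phi_norm_def F_def rb_eq)
    have dph: "(ph has_real_derivative rb s * ph s) (at s within J)" if "s \<in> J" for s
    proof -
      have "((\<lambda>s. exp (F s)) has_real_derivative exp (F s) * rb s) (at s within J)"
        by (rule DERIV_exp[THEN DERIV_chain2, OF dF[OF that]])
      moreover have "ph = (\<lambda>s. exp (F s))" using ph_eq by auto
      ultimately show ?thesis using ph_eq by (simp add: mult.commute)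
    qed
    define A where "A s = 2 * pi * integral I (\<lambda>r. u r s * f r)" for s
    have cI: "continuous_on I (\<lambda>r. u r s * f r)" if "s \<ge> 0" for s
      using cont_slice_r[OF cu, of s] that continuous_on_subset[OF cf(1)] by (auto intro!: continuous_intros)
    have cIR: "continuous_on I (\<lambda>r. Rx r s * (u r s * f r))" if "s \<ge> 0" for s
      using cont_slice_r[OF Rx_cont, of s] cI[OF that] that by (auto intro!: continuous_intros)
    have dA: "(A has_real_derivative rb s * A s - rb s) (at s within J)" if s: "s \<in> J" for s
    proof -
      have L: "((\<lambda>s. integral (cbox (-\<rho>) \<rho>) (\<lambda>r. u r s * f r)) has_field_derivative
          integral (cbox (-\<rho>) \<rho>) (\<lambda>r. (rb s - Rx r s) * u r s * f r)) (at s within J)"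
      proof (rule leibniz_rule_field_derivative[where fx="\<lambda>s r. (rb s - Rx r s) * u r s * f r"])
        fix x r assume x: "x \<in> J" and r: "r \<in> cbox (-\<rho>) \<rho>"
        then have rI: "r \<in> I" by (simp add: I_def)
        have "((\<lambda>s. u r s * f r) has_real_derivative (rb x - Rflow f u r x) * u r x * f r) (at x within J)"
          using DERIV_mult[OF DERIV_subset[OF ut[OF rI J0[OF x]] JT] DERIV_const[of "f r"]] by simp
        then show "((\<lambda>s. u r s * f r) has_real_derivative (rb x - Rx r x) * u r x * f r) (at x within J)"
          using R_eq[OF J0[OF x] rI] by simp
      next
        fix x assume "x \<in> J"
        then show "(\<lambda>r. u r x * f r) integrable_on cbox (- \<rho>) \<rho>"
          using cI[OF J0] by (auto simp: I_def intro!: integrable_continuous_interval)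
      next
        have c1: "continuous_on (J \<times> I) (\<lambda>(s,r). u r s)" by (rule cont_swap[OF cu JT])
        have c2: "continuous_on (J \<times> I) (\<lambda>(s,r). Rx r s)" by (rule cont_swap[OF Rx_cont JT])
        have c3: "continuous_on (J \<times> I) (\<lambda>p. rb (fst p))"
          by (rule continuous_on_compose2[OF continuous_on_subset[OF crb JT]]) (auto intro!: continuous_intros)
        have c4: "continuous_on (J \<times> I) (\<lambda>p. f (snd p))"
          by (rule continuous_on_compose2[OF cf(1)]) (auto intro!: continuous_intros)
        have "continuous_on (J \<times> I) (\<lambda>p. (rb (fst p) - Rx (snd p) (fst p)) * u (snd p) (fst p) * f (snd p))"
          using c1 c2 c3 c4 by (auto simp: case_prod_beta intro!: continuous_intros)
        then show "continuous_on (J \<times> cbox (- \<rho>) \<rho>) (\<lambda>(s, r). (rb s - Rx r s) * u r s * f r)"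
          by (simp add: case_prod_beta I_def)
      qed (use s in \<open>auto simp: J_def\<close>)
      have s0: "s \<ge> 0" using J0[OF s] .
      have int1: "(\<lambda>r. u r s * f r) integrable_on I" using cI[OF s0]
        by (auto simp: I_def intro!: integrable_continuous_interval)
      have int2: "(\<lambda>r. Rx r s * (u r s * f r)) integrable_on I" using cIR[OF s0]
        by (auto simp: I_def intro!: integrable_continuous_interval)
      have "integral I (\<lambda>r. (rb s - Rx r s) * u r s * f r)
          = integral I (\<lambda>r. rb s * (u r s * f r) - Rx r s * (u r s * f r))"
        by (simp add: algebra_simps)
      also have "\<dots> = rb s * integral I (\<lambda>r. u r s * f r) - integral I (\<lambda>r. Rx r s * (u r s * f r))"
      proof -
        have int1': "(\<lambda>r. rb s * (u r s * f r)) integrable_on I" using cI[OF s0]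
          by (auto simp: I_def intro!: integrable_continuous_interval continuous_intros)
        show ?thesis using integral_diff[OF int1' int2] by simp
      qed
      finally have e0: "integral I (\<lambda>r. (rb s - Rx r s) * u r s * f r) =
         rb s * integral I (\<lambda>r. u r s * f r) - integral I (\<lambda>r. Rx r s * (u r s * f r))" .
      have e1: "2 * pi * integral I (\<lambda>r. Rx r s * (u r s * f r)) = rb s" using rb_int[OF s0] by simp
      have "2 * pi * integral I (\<lambda>r. (rb s - Rx r s) * u r s * f r) = 2 * pi *
         (rb s * integral I (\<lambda>r. u r s * f r) - integral I (\<lambda>r. Rx r s * (u r s * f r)))"
        by (simp only: e0)
      also have "\<dots> = rb s * (2 * pi * integral I (\<lambda>r. u r s * f r))
          - 2 * pi * integral I (\<lambda>r. Rx r s * (u r s * f r))" by (simp add: algebra_simps)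
      also have "\<dots> = rb s * A s - rb s" by (simp only: A_def[symmetric] e1)
      finally have e: "2 * pi * integral I (\<lambda>r. (rb s - Rx r s) * u r s * f r) = rb s * A s - rb s" .
      have Aeq: "A = (\<lambda>s. 2 * pi * integral I (\<lambda>r. u r s * f r))" by (simp add: A_def fun_eq_iff)
      show ?thesis unfolding e[symmetric] unfolding Aeq I_def
        using DERIV_cmult[OF L[unfolded cbox_interval], of "2 * pi"] .
    qed
    have A1: "A s = 1" if "s \<in> J" for s
    proof -
      define B where "B s = (A s - 1) * exp (- F s)" for s
      have "B s = B 0"
      proof (rule const_within[where g=B and a=0 and b=\<tau>])
        fix x assume x: "x \<in> {0..\<tau>}"
        have xJ: "x \<in> J" using x by (simp add: J_def)
        have d: "((\<lambda>s. (A s - 1) * exp (- F s)) has_real_derivative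
            (rb x * A x - rb x - 0) * exp (- F x) + exp (- F x) * (- rb x) * (A x - 1)) (at x within J)"
          by (rule DERIV_mult[OF DERIV_diff[OF dA[OF xJ] DERIV_const]
              DERIV_exp[THEN DERIV_chain2, OF DERIV_minus[OF dF[OF xJ]]]])
        have "(rb x * A x - rb x - 0) * exp (- F x) + exp (- F x) * (- rb x) * (A x - 1) = 0"
          by (simp add: algebra_simps)
        then show "(B has_real_derivative 0) (at x within {0..\<tau>})"
          using d unfolding B_def[abs_def] J_def by simp
      qed (use that in \<open>auto simp: J_def\<close>)
      moreover have "B 0 = 0" using A0 by (simp add: B_def A_def F_def)
      ultimately show ?thesis by (simp add: B_def)
    qed
    have intUF: "(\<lambda>r. c * (u r s * f r)) integrable_on I" if "s \<ge> 0" for c s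
      using cI[OF that] by (auto simp: I_def intro!: integrable_continuous_interval continuous_intros)
    have intRUF: "(\<lambda>r. Rx r s * (u r s * f r)) integrable_on I" if "s \<ge> 0" for s
      using cIR[OF that] by (auto simp: I_def intro!: integrable_continuous_interval)
    have ufpos: "u r s * f r > 0" if "s \<ge> 0" "r \<in> I" for r s using upos[OF that] fpos[OF that(2)] by simp
    have intc: "2 * pi * integral I (\<lambda>r. c * (u r s * f r)) = c" if "s \<in> J" for c s
    proof -
      have "2 * pi * integral I (\<lambda>r. c * (u r s * f r)) = c * (2 * pi * integral I (\<lambda>r. u r s * f r))"
        by simp
      also have "\<dots> = c" using A1[OF that] by (simp add: A_def)
      finally show ?thesis .
    qed
    define m where "m s = Rflow f u \<rho> s" for s
    have mle: "m s \<le> rb s" if s: "s \<in> J" for s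
    proof -
      have "integral I (\<lambda>r. m s * (u r s * f r)) \<le> integral I (\<lambda>r. Rx r s * (u r s * f r))"
      proof (rule integral_le[OF intUF[OF J0[OF s]] intRUF[OF J0[OF s]]])
        fix r assume r: "r \<in> I"
        have "m s \<le> Rx r s" using min_bdry J0[OF s] r R_eq[OF J0[OF s] r] unfolding m_def I_def by fastforce
        then show "m s * (u r s * f r) \<le> Rx r s * (u r s * f r)"
          using ufpos[OF J0[OF s] r] by (simp add: mult_right_mono)
      qed
      then have "2 * pi * integral I (\<lambda>r. m s * (u r s * f r)) \<le> 2 * pi * integral I (\<lambda>r. Rx r s * (u r s * f r))"
        by simp
      then show ?thesis unfolding intc[OF s, of "m s"] rb_int[OF J0[OF s], symmetric] .
    qed
    have tJ: "\<tau> \<in> J" using \<tau>0 by (simp add: J_def)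
    define S where "S = (SUP r\<in>{-\<rho>..\<rho>}. Rflow f u r \<tau>)"
    have Sup: "rb \<tau> \<le> S"
    proof -
      have img: "(\<lambda>r. Rflow f u r \<tau>) ` {-\<rho>..\<rho>} = (\<lambda>r. Rx r \<tau>) ` I"
        using R_eq[OF \<tau>0] by (auto simp: I_def)
      have "compact ((\<lambda>r. Rx r \<tau>) ` I)"
        by (rule compact_continuous_image[OF cont_slice_r[OF Rx_cont]]) (auto simp: \<tau>0 I_def)
      then have bdd: "bdd_above ((\<lambda>r. Rflow f u r \<tau>) ` {-\<rho>..\<rho>})"
        unfolding img by (intro bounded_imp_bdd_above compact_imp_bounded)
      have le: "Rx r \<tau> \<le> S" if "r \<in> I" for r
        using cSUP_upper[OF _ bdd, of r] that R_eq[OF \<tau>0 that] by (auto simp: S_def I_def)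
      have "integral I (\<lambda>r. Rx r \<tau> * (u r \<tau> * f r)) \<le> integral I (\<lambda>r. S * (u r \<tau> * f r))"
      proof (rule integral_le[OF intRUF[OF \<tau>0] intUF[OF \<tau>0]])
        fix r assume r: "r \<in> I"
        show "Rx r \<tau> * (u r \<tau> * f r) \<le> S * (u r \<tau> * f r)"
          using le[OF r] ufpos[OF \<tau>0 r] by (simp add: mult_right_mono)
      qed
      then have "2 * pi * integral I (\<lambda>r. Rx r \<tau> * (u r \<tau> * f r)) \<le> 2 * pi * integral I (\<lambda>r. S * (u r \<tau> * f r))"
        by simp
      then show ?thesis unfolding intc[OF tJ, of S] rb_int[OF \<tau>0, symmetric] .
    qed
    define z where "z s = sqrt (ph s / u \<rho> s)" for s
    have bpos: "u \<rho> s > 0" if "s \<ge> 0" for s using upos[OF that rhoI(1)] .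
    have zpos: "z s > 0" if "s \<ge> 0" for s using bpos[OF that] phpos by (simp add: z_def)
    have rbz: "rb s * z s = C" if "s \<ge> 0" for s
    proof -
      have "rb s * z s = C * (sqrt (u \<rho> s / ph s) * sqrt (ph s / u \<rho> s))"
        by (simp add: rb_C[OF that] z_def)
      also have "sqrt (u \<rho> s / ph s) * sqrt (ph s / u \<rho> s) = 1"
        using bpos[OF that] phpos[of s] by (simp add: real_sqrt_mult[symmetric])
      finally show ?thesis by simp
    qed
    have dz: "(z has_real_derivative m s * z s / 2) (at s within J)" if s: "s \<in> J" for s
    proof -
      have s0: "s \<ge> 0" using J0[OF s] .
      have dy: "((\<lambda>s. ph s / u \<rho> s) has_real_derivative
          (rb s * ph s * u \<rho> s - ph s * ((rb s - Rflow f u \<rho> s) * u \<rho> s)) / (u \<rho> s * u \<rho> s))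
          (at s within J)"
        using DERIV_divide[OF dph[OF s] DERIV_subset[OF ut[OF rhoI(1) s0] JT]] bpos[OF s0] by simp
      have ypos: "ph s / u \<rho> s > 0" using bpos[OF s0] phpos[of s] by simp
      have d: "(z has_real_derivative inverse (sqrt (ph s / u \<rho> s)) / 2 *
          ((rb s * ph s * u \<rho> s - ph s * ((rb s - Rflow f u \<rho> s) * u \<rho> s)) / (u \<rho> s * u \<rho> s)))
          (at s within J)"
        unfolding z_def[abs_def] by (rule DERIV_chain2[OF DERIV_real_sqrt[OF ypos] dy])
      have "(rb s * ph s * u \<rho> s - ph s * ((rb s - Rflow f u \<rho> s) * u \<rho> s)) / (u \<rho> s * u \<rho> s)
          = m s * (ph s / u \<rho> s)"
        using bpos[OF s0] by (simp add: m_def field_simps)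
      also have "ph s / u \<rho> s = z s * z s" unfolding z_def using ypos
        by (metis real_sqrt_mult_self abs_of_pos)
      finally have e: "inverse (sqrt (ph s / u \<rho> s)) / 2 *
          ((rb s * ph s * u \<rho> s - ph s * ((rb s - Rflow f u \<rho> s) * u \<rho> s)) / (u \<rho> s * u \<rho> s))
          = m s * z s / 2"
        using zpos[OF s0] by (simp add: z_def[symmetric] field_simps)
      show ?thesis using d unfolding e .
    qed
    define g where "g s = C * s / 2 + 1 - z s" for s
    have "g 0 \<le> g \<tau>"
    proof (rule mono_within[where g=g and a=0 and b=\<tau> and g'="\<lambda>s. C / 2 - m s * z s / 2"])
      fix x assume x: "x \<in> {0..\<tau>}"
      then have xJ: "x \<in> J" by (simp add: J_def)
      have "((\<lambda>s. C / 2 * s + 1 - z s) has_real_derivative C / 2 * 1 + 0 - m x * z x / 2) (at x within J)"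
        by (rule DERIV_diff[OF DERIV_add[OF DERIV_cmult[OF DERIV_ident] DERIV_const] dz[OF xJ]])
      moreover have "g = (\<lambda>s. C / 2 * s + 1 - z s)" by (simp add: g_def fun_eq_iff)
      ultimately show "(g has_real_derivative C / 2 - m x * z x / 2) (at x within {0..\<tau>})"
        by (simp add: J_def)
      have "m x * z x \<le> rb x * z x" using mle[OF xJ] zpos[OF J0[OF xJ]] by (simp add: mult_right_mono)
      then show "0 \<le> C / 2 - m x * z x / 2" using rbz[OF J0[OF xJ]] by simp
    qed (use \<tau>0 in auto)
    moreover have "z 0 = 1" using ph0 u0[OF rhoI(1)] by (simp add: z_def)
    ultimately have zle: "z \<tau> \<le> 1 + C * \<tau> / 2" by (simp add: g_def)
    have "2 / (\<tau> + 2 / C) = C / (1 + C * \<tau> / 2)" using Cpos by (simp add: field_simps)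
    also have "\<dots> \<le> C / z \<tau>"
      using zle zpos[OF \<tau>0] Cpos by (intro divide_left_mono) auto
    also have "\<dots> = rb \<tau>" using rbz[OF \<tau>0] zpos[OF \<tau>0] by (simp add: field_simps)
    also have "\<dots> \<le> S" by (rule Sup)
    finally show ?thesis by (simp add: S_def)
  qed
  show ?thesis
    by (rule exI[of _ "2 / C"]) (use Cpos main in auto)
qed

end
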